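(* Let $G$ be a locally compact group, let $G_e$ be the connected component of the identity, and let $q_e:G\to G/G_e$ be the quotient map (with $G/G_e$ carrying the quotient topology). For $\tau\in\mathcal{T}_{td}(G)$ we have $G_e\subseteq\ker\eta_\tau$, so there is a unique continuous homomorphism $\tilde{\eta}_\tau:G/G_e\to G_\tau$ with $\tilde{\eta}_\tau\circ q_e=\eta_\tau$; let $\tilde{\tau}$ be the coarsest topology on $G/G_e$ making $\tilde{\eta}_\tau$ continuous. Then $\tilde{\tau}\in\mathcal{T}_{td}(G/G_e)$, the map $\tau\mapsto\tilde{\tau}:\mathcal{T}_{td}(G)\to\mathcal{T}_{td}(G/G_e)$ is a semilattice isomorphism (with respect to the operations $\vee$), and $G_\tau=(G/G_e)_{\tilde{\tau}}$ for each $\tau\in\mathcal{T}_{td}(G)$.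
   Context: For a locally compact group $G$ with topology $\tau_G$, $\mathcal{T}(G)$ denotes the set of group topologies $\tau\subseteq\tau_G$ on $G$ (not necessarily Hausdorff) whose completion $G_\tau$ is locally compact; $\eta_\tau:G\to G_\tau$ denotes the natural continuous homomorphism with dense range, and $\tau$ is the topology induced by $\eta_\tau$. For $\tau_1,\tau_2\in\mathcal{T}(G)$, $\tau_1\vee\tau_2$ is the coarsest topology on $G$ making $s\mapsto(\eta_{\tau_1}(s),\eta_{\tau_2}(s)):G\to G_{\tau_1}\times G_{\tau_2}$ continuous; $G_{\tau_1\vee\tau_2}$ is the closure of the image of this map, and $\mathcal{T}(G)$ is a semilattice under $\vee$. $\mathcal{T}_{td}(G)=\{\tau\in\mathcal{T}(G): G_\tau \text{ is totally disconnected}\}$, a subsemilattice of $\mathcal{T}(G)$. *)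

theory Defs
  imports "HOL-Analysis.Analysis" "HOL-Algebra.Coset"
begin

definition topological_group :: "('a, 'm) monoid_scheme \<Rightarrow> 'a topology \<Rightarrow> bool" where
  "topological_group G T \<longleftrightarrow> group G \<and> topspace T = carrier G \<and>
     continuous_map (prod_topology T T) T (\<lambda>p. fst p \<otimes>\<^bsub>G\<^esub> snd p) \<and>
     continuous_map T T (\<lambda>x. inv\<^bsub>G\<^esub> x)"

definition lc_group :: "('a, 'm) monoid_scheme \<Rightarrow> 'a topology \<Rightarrow> bool" where
  "lc_group G T \<longleftrightarrow> topological_group G T \<and> Hausdorff_space T \<and> locally_compact_space T"

definition totally_disconnected_space :: "'a topology \<Rightarrow> bool" where
  "totally_disconnected_space X \<longleftrightarrow> (\<forall>x\<in>topspace X. connected_component_of_set X x = {x})"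

definition coarser_group_topology :: "('a, 'm) monoid_scheme \<Rightarrow> 'a topology \<Rightarrow> 'a topology \<Rightarrow> bool" where
  "coarser_group_topology G T \<tau> \<longleftrightarrow> topological_group G \<tau> \<and> (\<forall>U. openin \<tau> U \<longrightarrow> openin T U)"

text \<open>(H, sigma, eta) is a locally compact completion of (G, tau): H is a locally compact
  (hence complete) group, eta a continuous homomorphism with dense range, and tau is
  the topology induced by eta.\<close>
definition lc_completion ::
  "('a, 'm) monoid_scheme \<Rightarrow> 'a topology \<Rightarrow> ('b, 'n) monoid_scheme \<Rightarrow> 'b topology \<Rightarrow> ('a \<Rightarrow> 'b) \<Rightarrow> bool" where
  "lc_completion G \<tau> H \<sigma> \<eta> \<longleftrightarrow> lc_group H \<sigma> \<and> \<eta> \<in> hom G H \<and> continuous_map \<tau> \<sigma> \<eta> \<and>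
     \<sigma> closure_of (\<eta> ` carrier G) = carrier H \<and> \<tau> = pullback_topology (carrier G) \<eta> \<sigma>"

text \<open>Any Hausdorff completion of (G,tau) injects into the type of sets of
  subsets of G (points correspond to traces of neighbourhood filters), so it suffices to look
  for completions on the type 'a set set.\<close>
definition T_set :: "('a, 'm) monoid_scheme \<Rightarrow> 'a topology \<Rightarrow> 'a topology set" where
  "T_set G T = {\<tau>. coarser_group_topology G T \<tau> \<and>
     (\<exists>(H :: 'a set set monoid) \<sigma> \<eta>. lc_completion G \<tau> H \<sigma> \<eta>)}"

definition T_td :: "('a, 'm) monoid_scheme \<Rightarrow> 'a topology \<Rightarrow> 'a topology set" where
  "T_td G T = {\<tau> \<in> T_set G T.
     \<exists>(H :: 'a set set monoid) \<sigma> \<eta>. lc_completion G \<tau> H \<sigma> \<eta> \<and> totally_disconnected_space \<sigma>}"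

definition completion_of ::
  "('a, 'm) monoid_scheme \<Rightarrow> 'a topology \<Rightarrow> 'a set set monoid \<times> 'a set set topology \<times> ('a \<Rightarrow> 'a set set)" where
  "completion_of G \<tau> = (SOME (H, \<sigma>, \<eta>). lc_completion G \<tau> H \<sigma> \<eta>)"

definition tjoin :: "('a, 'm) monoid_scheme \<Rightarrow> 'a topology \<Rightarrow> 'a topology \<Rightarrow> 'a topology" where
  "tjoin G \<tau>1 \<tau>2 =
     (case completion_of G \<tau>1 of (H1, \<sigma>1, \<eta>1) \<Rightarrow>
      case completion_of G \<tau>2 of (H2, \<sigma>2, \<eta>2) \<Rightarrow>
        pullback_topology (carrier G) (\<lambda>s. (\<eta>1 s, \<eta>2 s)) (prod_topology \<sigma>1 \<sigma>2))"

definition quotient_topology :: "'a topology \<Rightarrow> ('a \<Rightarrow> 'b) \<Rightarrow> 'b set \<Rightarrow> 'b topology" where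
  "quotient_topology X q B = topology (\<lambda>V. V \<subseteq> B \<and> openin X {x \<in> topspace X. q x \<in> V})"

end

theory Submission
  imports Defs "HOL-Algebra.Weak_Morphisms"
begin


lemma lc_completion_carrier:
  assumes "lc_completion G \<tau> H \<sigma> \<eta>"
  shows "topspace \<sigma> = carrier H" "\<eta> \<in> hom G H" "continuous_map \<tau> \<sigma> \<eta>"
    "\<tau> = pullback_topology (carrier G) \<eta> \<sigma>" "group H" "lc_group H \<sigma>"
    "topspace \<tau> = carrier G" "\<And>x. x \<in> carrier G \<Longrightarrow> \<eta> x \<in> carrier H"
proof -
  show t: "topspace \<sigma> = carrier H" "group H" "lc_group H \<sigma>"
    using assms by (auto simp: lc_completion_def lc_group_def topological_group_def)
  show h: "\<eta> \<in> hom G H" "continuous_map \<tau> \<sigma> \<eta>" "\<tau> = pullback_topology (carrier G) \<eta> \<sigma>"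
    using assms by (auto simp: lc_completion_def)
  show c: "\<And>x. x \<in> carrier G \<Longrightarrow> \<eta> x \<in> carrier H" using h(1) by (auto simp: hom_def)
  show "topspace \<tau> = carrier G"
    by (subst h(3)) (auto simp: topspace_pullback_topology t c)
qed

lemma tg_of_completion:
  assumes G: "group G" and C: "lc_completion G \<tau> H \<sigma> \<eta>"
  shows "topological_group G \<tau>"
proof -
  note L = lc_completion_carrier[OF C]
  interpret G: group G by (rule G)
  interpret H: group H by (rule L(5))
  have tH: "continuous_map (prod_topology \<sigma> \<sigma>) \<sigma> (\<lambda>p. fst p \<otimes>\<^bsub>H\<^esub> snd p)"
     "continuous_map \<sigma> \<sigma> (\<lambda>x. inv\<^bsub>H\<^esub> x)"
    using L(6) by (auto simp: lc_group_def topological_group_def)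
  have ehom: "\<And>x y. x \<in> carrier G \<Longrightarrow> y \<in> carrier G \<Longrightarrow> \<eta> (x \<otimes>\<^bsub>G\<^esub> y) = \<eta> x \<otimes>\<^bsub>H\<^esub> \<eta> y"
    using L(2) by (auto simp: hom_def)
  have einv: "\<And>x. x \<in> carrier G \<Longrightarrow> \<eta> (inv\<^bsub>G\<^esub> x) = inv\<^bsub>H\<^esub> (\<eta> x)"
    using L(2) by (simp add: group_hom.hom_inv group_hom_axioms_def group_hom_def G L(5))
  have pm: "continuous_map (prod_topology \<tau> \<tau>) (prod_topology \<sigma> \<sigma>) (\<lambda>p. (\<eta> (fst p), \<eta> (snd p)))"
    by (auto simp: continuous_map_paired intro!: continuous_map_compose[OF continuous_map_fst L(3), unfolded o_def]
        continuous_map_compose[OF continuous_map_snd L(3), unfolded o_def])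
  have m1: "continuous_map (prod_topology \<tau> \<tau>) \<sigma> (\<eta> \<circ> (\<lambda>p. fst p \<otimes>\<^bsub>G\<^esub> snd p))"
  proof (rule continuous_map_eq[OF continuous_map_compose[OF pm tH(1)]])
    fix p assume "p \<in> topspace (prod_topology \<tau> \<tau>)"
    then show "((\<lambda>p. fst p \<otimes>\<^bsub>H\<^esub> snd p) \<circ> (\<lambda>p. (\<eta> (fst p), \<eta> (snd p)))) p = (\<eta> \<circ> (\<lambda>p. fst p \<otimes>\<^bsub>G\<^esub> snd p)) p"
      using L(7) by (auto simp: ehom)
  qed
  have m2: "continuous_map (prod_topology \<tau> \<tau>) (pullback_topology (carrier G) \<eta> \<sigma>) (\<lambda>p. fst p \<otimes>\<^bsub>G\<^esub> snd p)"
    by (rule continuous_map_pullback'[OF m1]) (auto simp: L(7))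
  have i1: "continuous_map \<tau> \<sigma> (\<eta> \<circ> (\<lambda>x. inv\<^bsub>G\<^esub> x))"
  proof (rule continuous_map_eq[OF continuous_map_compose[OF L(3) tH(2)]])
    fix x assume "x \<in> topspace \<tau>"
    then show "((\<lambda>x. inv\<^bsub>H\<^esub> x) \<circ> \<eta>) x = (\<eta> \<circ> (\<lambda>x. inv\<^bsub>G\<^esub> x)) x"
      using L(7) by (auto simp: einv)
  qed
  have i2: "continuous_map \<tau> (pullback_topology (carrier G) \<eta> \<sigma>) (\<lambda>x. inv\<^bsub>G\<^esub> x)"
    by (rule continuous_map_pullback'[OF i1]) (auto simp: L(7))
  show ?thesis
    unfolding topological_group_def using m2 i2 L(7) G by (metis L(4))
qed

lemma pullback_compose:
  assumes "h ` A \<subseteq> B"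
  shows "pullback_topology A h (pullback_topology B k X) = pullback_topology A (k \<circ> h) X"
  unfolding topology_eq openin_pullback_topology
proof (intro allI iffI)
  fix S assume "\<exists>U. (\<exists>Ua. openin X Ua \<and> U = k -` Ua \<inter> B) \<and> S = h -` U \<inter> A"
  then obtain U where "openin X U" "S = h -` (k -` U \<inter> B) \<inter> A" by blast
  then show "\<exists>U. openin X U \<and> S = (k \<circ> h) -` U \<inter> A" using assms by (intro exI[of _ U]) auto
next
  fix S assume "\<exists>U. openin X U \<and> S = (k \<circ> h) -` U \<inter> A"
  then obtain U where "openin X U" "S = (k \<circ> h) -` U \<inter> A" by blast
  then show "\<exists>U. (\<exists>Ua. openin X Ua \<and> U = k -` Ua \<inter> B) \<and> S = h -` U \<inter> A" using assms
    by (intro exI[of _ "k -` U \<inter> B"]) auto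
qed

lemma pullback_cong:
  assumes "\<And>x. x \<in> A \<Longrightarrow> f x = g x"
  shows "pullback_topology A f X = pullback_topology A g X"
proof -
  have "\<And>U. f -` U \<inter> A = g -` U \<inter> A" using assms by auto
  then show ?thesis unfolding topology_eq openin_pullback_topology by auto
qed

lemma completion_transfer:
  assumes C: "lc_completion G \<tau> H \<sigma> \<eta>" and inj: "inj_on f (carrier H)"
  defines "\<sigma>' \<equiv> pullback_topology (f ` carrier H) (inv_into (carrier H) f) \<sigma>"
  shows "lc_completion G \<tau> (image_group f H) \<sigma>' (f \<circ> \<eta>)"
    "totally_disconnected_space \<sigma> \<Longrightarrow> totally_disconnected_space \<sigma>'"
proof -
  note L = lc_completion_carrier[OF C]
  interpret H: group H by (rule L(5))
  define g where "g = inv_into (carrier H) f"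
  have gf: "\<And>x. x \<in> carrier H \<Longrightarrow> g (f x) = x" using inj by (simp add: g_def)
  have gin: "\<And>y. y \<in> f ` carrier H \<Longrightarrow> g y \<in> carrier H" by (auto simp: gf)
  have fg: "\<And>y. y \<in> f ` carrier H \<Longrightarrow> f (g y) = y" by (auto simp: gf)
  have ts: "topspace \<sigma>' = f ` carrier H"
    unfolding \<sigma>'_def topspace_pullback_topology L(1) g_def[symmetric] using gin by auto
  have cg: "continuous_map \<sigma>' \<sigma> g"
    using continuous_map_pullback[OF continuous_map_id, of "f ` carrier H" g \<sigma>] unfolding \<sigma>'_def g_def by simp
  have cf: "continuous_map \<sigma> \<sigma>' f"
    unfolding \<sigma>'_def g_def[symmetric]
    by (rule continuous_map_pullback') (auto simp: L(1) gf intro: continuous_map_eq[OF continuous_map_id])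
  have hm: "homeomorphic_maps \<sigma> \<sigma>' f g"
    unfolding homeomorphic_maps_def using cf cg ts L(1) gf fg by auto
  have hmap: "homeomorphic_map \<sigma> \<sigma>' f" using hm homeomorphic_map_maps by blast
  have hsp: "\<sigma> homeomorphic_space \<sigma>'" using hm homeomorphic_space_def by blast
  have iso: "f \<in> iso H (image_group f H)" by (rule inj_imp_image_group_iso[OF inj])
  have grp: "group (image_group f H)" by (rule H.inj_imp_image_group_is_group[OF inj])
  have fhom: "f \<in> hom H (image_group f H)" using iso by (simp add: iso_def)
  have gh: "group_hom H (image_group f H) f"
    using grp fhom by (simp add: group_hom_def group_hom_axioms_def L(5))
  have car: "carrier (image_group f H) = f ` carrier H" by (simp add: image_group_carrier)
  have mul: "\<And>a b. a \<otimes>\<^bsub>image_group f H\<^esub> b = f (g a \<otimes>\<^bsub>H\<^esub> g b)"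
    by (simp add: image_group_def g_def)
  have inv: "\<And>y. y \<in> f ` carrier H \<Longrightarrow> inv\<^bsub>image_group f H\<^esub> y = f (inv\<^bsub>H\<^esub> (g y))"
    using group_hom.hom_inv[OF gh] gin fg by metis
  have tH: "continuous_map (prod_topology \<sigma> \<sigma>) \<sigma> (\<lambda>p. fst p \<otimes>\<^bsub>H\<^esub> snd p)"
     "continuous_map \<sigma> \<sigma> (\<lambda>x. inv\<^bsub>H\<^esub> x)" "Hausdorff_space \<sigma>" "locally_compact_space \<sigma>"
    using L(6) by (auto simp: lc_group_def topological_group_def)
  have pm: "continuous_map (prod_topology \<sigma>' \<sigma>') (prod_topology \<sigma> \<sigma>) (\<lambda>p. (g (fst p), g (snd p)))"
    by (auto simp: continuous_map_paired intro!: continuous_map_compose[OF continuous_map_fst cg, unfolded o_def]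
        continuous_map_compose[OF continuous_map_snd cg, unfolded o_def])
  have m: "continuous_map (prod_topology \<sigma>' \<sigma>') \<sigma>' (\<lambda>p. fst p \<otimes>\<^bsub>image_group f H\<^esub> snd p)"
    unfolding mul using continuous_map_compose[OF continuous_map_compose[OF pm tH(1)] cf] by (simp add: o_def)
  have i: "continuous_map \<sigma>' \<sigma>' (\<lambda>x. inv\<^bsub>image_group f H\<^esub> x)"
    by (rule continuous_map_eq[OF continuous_map_compose[OF continuous_map_compose[OF cg tH(2)] cf]])
       (auto simp: ts inv)
  have lcg: "lc_group (image_group f H) \<sigma>'"
    unfolding lc_group_def topological_group_def
    using grp ts car m i homeomorphic_Hausdorff_space[OF hsp] homeomorphic_locally_compact_space[OF hsp] tH
    by auto
  have hom2: "f \<circ> \<eta> \<in> hom G (image_group f H)" using hom_compose[OF L(2) fhom] .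
  have cont2: "continuous_map \<tau> \<sigma>' (f \<circ> \<eta>)" using continuous_map_compose[OF L(3) cf] .
  have dense: "\<sigma> closure_of (\<eta> ` carrier G) = carrier H" using C by (simp add: lc_completion_def)
  have cl2: "\<sigma>' closure_of ((f \<circ> \<eta>) ` carrier G) = carrier (image_group f H)"
    using homeomorphic_map_closure_of[OF hmap, of "\<eta> ` carrier G"] L(1) L(8) dense car
    by (auto simp: image_comp)
  have pb: "\<tau> = pullback_topology (carrier G) (f \<circ> \<eta>) \<sigma>'"
  proof -
    have "pullback_topology (carrier G) (f \<circ> \<eta>) \<sigma>' = pullback_topology (carrier G) (g \<circ> (f \<circ> \<eta>)) \<sigma>"
      unfolding \<sigma>'_def g_def[symmetric] by (rule pullback_compose) (auto simp: L(8))
    also have "\<dots> = pullback_topology (carrier G) \<eta> \<sigma>"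
      by (rule pullback_cong) (auto simp: gf L(8))
    finally show ?thesis using L(4) by simp
  qed
  show "lc_completion G \<tau> (image_group f H) \<sigma>' (f \<circ> \<eta>)"
    unfolding lc_completion_def using lcg hom2 cont2 cl2 pb by auto
  assume td: "totally_disconnected_space \<sigma>"
  show "totally_disconnected_space \<sigma>'"
    unfolding totally_disconnected_space_def
  proof
    fix y assume y: "y \<in> topspace \<sigma>'"
    then have gy: "g y \<in> topspace \<sigma>" using ts gin L(1) by auto
    have "connected_component_of_set \<sigma>' (f (g y)) = f ` connected_component_of_set \<sigma> (g y)"
      by (rule homeomorphic_map_connected_component_of[OF hmap gy])
    also have "\<dots> = {f (g y)}" using td gy by (simp add: totally_disconnected_space_def)
    finally show "connected_component_of_set \<sigma>' y = {y}" using fg y ts by simp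
  qed
qed

lemma completion_to_setset:
  fixes G :: "('a,'m) monoid_scheme" and H :: "('c,'n) monoid_scheme"
  assumes C: "lc_completion G \<tau> H \<sigma> \<eta>"
  shows "\<exists>(H'::'a set set monoid) \<sigma>' \<eta>'. lc_completion G \<tau> H' \<sigma>' \<eta>' \<and>
           (totally_disconnected_space \<sigma> \<longrightarrow> totally_disconnected_space \<sigma>')"
proof -
  note L = lc_completion_carrier[OF C]
  define f where "f h = {\<eta> -` U \<inter> carrier G | U. openin \<sigma> U \<and> h \<in> U}" for h
  have haus: "Hausdorff_space \<sigma>" using L(6) by (simp add: lc_group_def)
  have dense: "\<sigma> closure_of (\<eta> ` carrier G) = carrier H" using C by (simp add: lc_completion_def)
  have inj: "inj_on f (carrier H)"
  proof (rule inj_onI, rule ccontr)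
    fix x y assume x: "x \<in> carrier H" and y: "y \<in> carrier H" and eq: "f x = f y" and ne: "x \<noteq> y"
    obtain U V where UV: "openin \<sigma> U" "openin \<sigma> V" "x \<in> U" "y \<in> V" "disjnt U V"
      using haus x y ne L(1) unfolding Hausdorff_space_def by metis
    have "\<eta> -` U \<inter> carrier G \<in> f x" using UV unfolding f_def by blast
    then have "\<eta> -` U \<inter> carrier G \<in> f y" using eq by simp
    then obtain W where W: "openin \<sigma> W" "y \<in> W" "\<eta> -` U \<inter> carrier G = \<eta> -` W \<inter> carrier G"
      unfolding f_def by blast
    have "y \<in> \<sigma> closure_of (\<eta> ` carrier G)" using dense y by simp
    moreover have "y \<in> W \<inter> V \<and> openin \<sigma> (W \<inter> V)" using W UV by auto
    ultimately obtain z where "z \<in> \<eta> ` carrier G" "z \<in> W \<inter> V"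
      unfolding in_closure_of by blast
    then obtain a where a: "a \<in> carrier G" "\<eta> a \<in> W" "\<eta> a \<in> V" by auto
    then have "a \<in> \<eta> -` W \<inter> carrier G" by simp
    then have "\<eta> a \<in> U" using W(3) by blast
    then show False using a UV(5) by (auto simp: disjnt_def)
  qed
  have t: "lc_completion G \<tau> (image_group f H) (pullback_topology (f ` carrier H) (inv_into (carrier H) f) \<sigma>) (f \<circ> \<eta>)"
     "totally_disconnected_space \<sigma> \<longrightarrow> totally_disconnected_space (pullback_topology (f ` carrier H) (inv_into (carrier H) f) \<sigma>)"
    using completion_transfer[OF C inj] by auto
  show ?thesis by (rule exI, rule exI, rule exI, rule conjI[OF t(1) t(2)])
qed

lemma translations_continuous:
  assumes "topological_group G T" "a \<in> carrier G"
  shows "continuous_map T T (\<lambda>y. a \<otimes>\<^bsub>G\<^esub> y)" "continuous_map T T (\<lambda>y. y \<otimes>\<^bsub>G\<^esub> a)"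
proof -
  have ts: "topspace T = carrier G" and m: "continuous_map (prod_topology T T) T (\<lambda>p. fst p \<otimes>\<^bsub>G\<^esub> snd p)"
    using assms by (auto simp: topological_group_def)
  have p1: "continuous_map T (prod_topology T T) (\<lambda>y. (a, y))"
    using assms(2) ts by (auto simp: continuous_map_paired)
  have p2: "continuous_map T (prod_topology T T) (\<lambda>y. (y, a))"
    using assms(2) ts by (auto simp: continuous_map_paired)
  show "continuous_map T T (\<lambda>y. a \<otimes>\<^bsub>G\<^esub> y)" using continuous_map_compose[OF p1 m] by (simp add: o_def)
  show "continuous_map T T (\<lambda>y. y \<otimes>\<^bsub>G\<^esub> a)" using continuous_map_compose[OF p2 m] by (simp add: o_def)
qed

lemma normal_Ge:
  assumes "lc_group G T"
  shows "connected_component_of_set T \<one>\<^bsub>G\<^esub> \<lhd> G"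
proof -
  define Ge where "Ge = connected_component_of_set T \<one>\<^bsub>G\<^esub>"
  have tg: "topological_group G T" using assms by (simp add: lc_group_def)
  then have G: "group G" and ts: "topspace T = carrier G" and
    iv: "continuous_map T T (\<lambda>x. inv\<^bsub>G\<^esub> x)"
    by (auto simp: topological_group_def)
  interpret G: group G by (rule G)
  have one: "\<one>\<^bsub>G\<^esub> \<in> Ge" unfolding Ge_def using ts by (simp add: connected_component_of_refl)
  have sub: "Ge \<subseteq> carrier G" unfolding Ge_def using connected_component_of_subset_topspace ts by metis
  have conn: "connectedin T Ge" unfolding Ge_def by (rule connectedin_connected_component_of)
  have key: "k ` Ge \<subseteq> Ge" if "continuous_map T T k" "k \<one>\<^bsub>G\<^esub> = \<one>\<^bsub>G\<^esub>" for k
  proof -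
    have "connectedin T (k ` Ge)" by (rule connectedin_continuous_map_image[OF that(1) conn])
    moreover have "\<one>\<^bsub>G\<^esub> \<in> k ` Ge" using one that(2) by (metis imageI)
    ultimately show ?thesis unfolding Ge_def by (rule connected_component_of_maximal)
  qed
  have inv: "inv\<^bsub>G\<^esub> a \<in> Ge" if "a \<in> Ge" for a using key[OF iv] that by auto
  have mult: "a \<otimes>\<^bsub>G\<^esub> b \<in> Ge" if a: "a \<in> Ge" and b: "b \<in> Ge" for a b
  proof -
    have ac: "a \<in> carrier G" using a sub by auto
    have c1: "connectedin T ((\<lambda>y. a \<otimes>\<^bsub>G\<^esub> y) ` Ge)"
      by (rule connectedin_continuous_map_image[OF translations_continuous(1)[OF tg ac] conn])
    have "a \<in> (\<lambda>y. a \<otimes>\<^bsub>G\<^esub> y) ` Ge" using one ac by (metis G.r_one imageI)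
    then have "Ge \<inter> (\<lambda>y. a \<otimes>\<^bsub>G\<^esub> y) ` Ge \<noteq> {}" using a by blast
    then have "connectedin T (Ge \<union> (\<lambda>y. a \<otimes>\<^bsub>G\<^esub> y) ` Ge)" using connectedin_Un conn c1 by blast
    then have "Ge \<union> (\<lambda>y. a \<otimes>\<^bsub>G\<^esub> y) ` Ge \<subseteq> Ge"
      unfolding Ge_def by (rule connected_component_of_maximal) (use one in \<open>auto simp: Ge_def\<close>)
    then show ?thesis using b by auto
  qed
  have sg: "subgroup Ge G" by (rule G.subgroupI[OF sub]) (use one inv mult in auto)
  have conj: "x \<otimes>\<^bsub>G\<^esub> h \<otimes>\<^bsub>G\<^esub> inv\<^bsub>G\<^esub> x \<in> Ge" if x: "x \<in> carrier G" and h: "h \<in> Ge" for x h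
  proof -
    have c: "continuous_map T T ((\<lambda>y. y \<otimes>\<^bsub>G\<^esub> inv\<^bsub>G\<^esub> x) \<circ> (\<lambda>y. x \<otimes>\<^bsub>G\<^esub> y))"
      using translations_continuous[OF tg] x by (meson G.inv_closed continuous_map_compose)
    have "((\<lambda>y. y \<otimes>\<^bsub>G\<^esub> inv\<^bsub>G\<^esub> x) \<circ> (\<lambda>y. x \<otimes>\<^bsub>G\<^esub> y)) \<one>\<^bsub>G\<^esub> = \<one>\<^bsub>G\<^esub>" using x by simp
    then show ?thesis using key[OF c] h by auto
  qed
  show ?thesis unfolding Ge_def[symmetric] using G.normal_inv_iff sg conj by blast
qed

lemma Ge_kernel:
  assumes lc: "lc_group G T" and td: "\<tau> \<in> T_td G T" and C: "lc_completion G \<tau> H \<sigma> \<eta>"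
  shows "connected_component_of_set T \<one>\<^bsub>G\<^esub> \<subseteq> kernel G H \<eta>"
proof -
  define Ge where "Ge = connected_component_of_set T \<one>\<^bsub>G\<^esub>"
  have tg: "topological_group G T" using lc by (simp add: lc_group_def)
  then have G: "group G" and ts: "topspace T = carrier G"
    by (auto simp: topological_group_def)
  interpret G: group G by (rule G)
  obtain H0 :: "'a set set monoid" and \<sigma>0 \<eta>0 where C0: "lc_completion G \<tau> H0 \<sigma>0 \<eta>0"
    and td0: "totally_disconnected_space \<sigma>0" using td unfolding T_td_def by blast
  have coarse: "\<And>U. openin \<tau> U \<Longrightarrow> openin T U" using td by (auto simp: T_td_def T_set_def coarser_group_topology_def)
  note L0 = lc_completion_carrier[OF C0]
  note L = lc_completion_carrier[OF C]
  interpret H0: group H0 by (rule L0(5))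
  interpret H: group H by (rule L(5))
  have ghom0: "group_hom G H0 \<eta>0" using L0(2) by (simp add: group_hom_def group_hom_axioms_def G L0(5))
  have ghom: "group_hom G H \<eta>" using L(2) by (simp add: group_hom_def group_hom_axioms_def G L(5))
  have cid: "continuous_map T \<tau> id"
    unfolding continuous_map_def using ts L(7) coarse
  proof (auto)
    fix U assume "openin \<tau> U"
    moreover have "{x \<in> carrier G. x \<in> U} = U" using openin_subset[OF \<open>openin \<tau> U\<close>] L(7) by auto
    ultimately show "openin T {x \<in> carrier G. x \<in> U}" using coarse by simp
  qed
  have one: "\<one>\<^bsub>G\<^esub> \<in> Ge" unfolding Ge_def using ts by (simp add: connected_component_of_refl)
  have sub: "Ge \<subseteq> carrier G" unfolding Ge_def using connected_component_of_subset_topspace ts by metis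
  have conn: "connectedin \<tau> Ge"
    using connectedin_continuous_map_image[OF cid connectedin_connected_component_of[of T "\<one>\<^bsub>G\<^esub>"]]
    unfolding Ge_def by simp
  have c0: "connectedin \<sigma>0 (\<eta>0 ` Ge)" by (rule connectedin_continuous_map_image[OF L0(3) conn])
  have "\<eta>0 ` Ge \<subseteq> connected_component_of_set \<sigma>0 \<one>\<^bsub>H0\<^esub>"
    by (rule connected_component_of_maximal[OF c0]) (metis group_hom.hom_one[OF ghom0] imageI one)
  also have "\<dots> = {\<one>\<^bsub>H0\<^esub>}" using td0 L0(1) by (simp add: totally_disconnected_space_def)
  finally have k0: "\<And>x. x \<in> Ge \<Longrightarrow> \<eta>0 x = \<one>\<^bsub>H0\<^esub>" by auto
  have "\<eta> x = \<one>\<^bsub>H\<^esub>" if x: "x \<in> Ge" for x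
  proof (rule ccontr)
    assume ne: "\<eta> x \<noteq> \<one>\<^bsub>H\<^esub>"
    have haus: "Hausdorff_space \<sigma>" using L(6) by (simp add: lc_group_def)
    have xc: "x \<in> carrier G" using x sub by auto
    obtain U V where UV: "openin \<sigma> U" "openin \<sigma> V" "\<eta> x \<in> U" "\<one>\<^bsub>H\<^esub> \<in> V" "disjnt U V"
      using haus ne L(1) L(8)[OF xc] H.one_closed unfolding Hausdorff_space_def by metis
    have "openin \<tau> {y \<in> topspace \<tau>. \<eta> y \<in> U}" using L(3) UV(1) by (simp add: continuous_map_def)
    then have "openin (pullback_topology (carrier G) \<eta>0 \<sigma>0) {y \<in> carrier G. \<eta> y \<in> U}"
      using L0(4) L(7) by simp
    then obtain W where W: "openin \<sigma>0 W" "{y \<in> carrier G. \<eta> y \<in> U} = \<eta>0 -` W \<inter> carrier G"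
      unfolding openin_pullback_topology by blast
    have "x \<in> \<eta>0 -` W \<inter> carrier G" using W(2) xc UV(3) by blast
    then have "\<one>\<^bsub>H0\<^esub> \<in> W" using k0[OF x] by simp
    then have "\<one>\<^bsub>G\<^esub> \<in> \<eta>0 -` W \<inter> carrier G" using group_hom.hom_one[OF ghom0] by simp
    then have "\<eta> \<one>\<^bsub>G\<^esub> \<in> U" using W(2) by blast
    then show False using UV(4,5) group_hom.hom_one[OF ghom] by (auto simp: disjnt_def)
  qed
  then show ?thesis using sub unfolding kernel_def Ge_def[symmetric] by auto
qed

lemma openin_quotient_topology:
  "openin (quotient_topology X q B) V \<longleftrightarrow> V \<subseteq> B \<and> openin X {x \<in> topspace X. q x \<in> V}"
proof -
  have "istopology (\<lambda>V. V \<subseteq> B \<and> openin X {x \<in> topspace X. q x \<in> V})"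
    unfolding istopology_def
  proof (rule conjI; intro allI impI)
    fix S T assume S: "S \<subseteq> B \<and> openin X {x \<in> topspace X. q x \<in> S}"
      and T: "T \<subseteq> B \<and> openin X {x \<in> topspace X. q x \<in> T}"
    have "{x \<in> topspace X. q x \<in> S \<inter> T} = {x \<in> topspace X. q x \<in> S} \<inter> {x \<in> topspace X. q x \<in> T}" by auto
    then show "S \<inter> T \<subseteq> B \<and> openin X {x \<in> topspace X. q x \<in> S \<inter> T}" using S T by auto
  next
    fix K assume K: "\<forall>S\<in>K. S \<subseteq> B \<and> openin X {x \<in> topspace X. q x \<in> S}"
    have "{x \<in> topspace X. q x \<in> \<Union>K} = \<Union>((\<lambda>S. {x \<in> topspace X. q x \<in> S}) ` K)" by auto
    then show "\<Union>K \<subseteq> B \<and> openin X {x \<in> topspace X. q x \<in> \<Union>K}" using K by auto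
  qed
  then show ?thesis unfolding quotient_topology_def by simp
qed

lemma topspace_quotient_topology:
  assumes "\<And>x. x \<in> topspace X \<Longrightarrow> q x \<in> B"
  shows "topspace (quotient_topology X q B) = B"
proof -
  have "{x \<in> topspace X. q x \<in> B} = topspace X" using assms by auto
  then have "openin (quotient_topology X q B) B" by (simp add: openin_quotient_topology)
  then have "B \<subseteq> topspace (quotient_topology X q B)" by (rule openin_subset)
  moreover have "topspace (quotient_topology X q B) \<subseteq> B"
    unfolding topspace_def by (auto simp: openin_quotient_topology)
  ultimately show ?thesis by blast
qed

lemma quotient_facts:
  assumes lc: "lc_group G T"
  defines "Ge \<equiv> connected_component_of_set T \<one>\<^bsub>G\<^esub>"
  defines "q \<equiv> (\<lambda>x. Ge #>\<^bsub>G\<^esub> x)"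
  defines "Q \<equiv> G Mod Ge"
  shows "group Q" "carrier Q = q ` carrier G" "q \<in> hom G Q" "group G" "topspace T = carrier G"
    "\<And>x. x \<in> carrier G \<Longrightarrow> x \<in> q x" "\<And>x. x \<in> carrier G \<Longrightarrow> q x \<subseteq> carrier G"
    "\<And>x y. x \<in> carrier G \<Longrightarrow> y \<in> q x \<Longrightarrow> \<exists>h\<in>Ge. y = h \<otimes>\<^bsub>G\<^esub> x"
proof -
  have N: "Ge \<lhd> G" unfolding Ge_def by (rule normal_Ge[OF lc])
  show "group Q" unfolding Q_def by (rule normal.factorgroup_is_group[OF N])
  show "carrier Q = q ` carrier G" unfolding Q_def q_def by (rule carrier_FactGroup)
  show "q \<in> hom G Q" unfolding Q_def q_def by (rule normal.r_coset_hom_Mod[OF N])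
  show G: "group G" "topspace T = carrier G" using lc by (auto simp: lc_group_def topological_group_def)
  have sg: "subgroup Ge G" using N by (simp add: normal_def)
  show "\<And>x. x \<in> carrier G \<Longrightarrow> x \<in> q x" unfolding q_def using group.rcos_self[OF G(1) _ sg] by blast
  show "\<And>x. x \<in> carrier G \<Longrightarrow> q x \<subseteq> carrier G" unfolding q_def
    using sg monoid.r_coset_subset_G[OF group.is_monoid[OF G(1)]] subgroup.subset by blast
  show "\<And>x y. x \<in> carrier G \<Longrightarrow> y \<in> q x \<Longrightarrow> \<exists>h\<in>Ge. y = h \<otimes>\<^bsub>G\<^esub> x"
    unfolding q_def r_coset_def by auto
qed


lemma descend:
  assumes lc: "lc_group G T" and td: "\<tau> \<in> T_td G T" and C: "lc_completion G \<tau> H \<sigma> \<eta>"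
  defines "Ge \<equiv> connected_component_of_set T \<one>\<^bsub>G\<^esub>"
  defines "q \<equiv> (\<lambda>x. Ge #>\<^bsub>G\<^esub> x)"
  defines "Q \<equiv> G Mod Ge"
  defines "TQ \<equiv> quotient_topology T q (carrier Q)"
  shows "\<exists>\<eta>'. \<eta>' \<in> hom Q H \<and> continuous_map TQ \<sigma> \<eta>' \<and> (\<forall>x\<in>carrier G. \<eta>' (q x) = \<eta> x) \<and>
            quotient_topology \<tau> q (carrier Q) = pullback_topology (carrier Q) \<eta>' \<sigma> \<and>
            lc_completion Q (quotient_topology \<tau> q (carrier Q)) H \<sigma> \<eta>'"
proof -
  note QF = quotient_facts[OF lc, folded Ge_def, folded q_def, folded Q_def]
  note L = lc_completion_carrier[OF C]
  interpret G: group G by (rule QF(4))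
  interpret H: group H by (rule L(5))
  have ghom: "group_hom G H \<eta>" using L(2) by (simp add: group_hom_def group_hom_axioms_def QF(4) L(5))
  have ker: "Ge \<subseteq> kernel G H \<eta>" unfolding Ge_def by (rule Ge_kernel[OF lc td C])
  have const: "\<eta> y = \<eta> x" if x: "x \<in> carrier G" and y: "y \<in> q x" for x y
  proof -
    obtain h where h: "h \<in> Ge" "y = h \<otimes>\<^bsub>G\<^esub> x" using QF(8)[OF x y] by blast
    have "h \<in> carrier G" "\<eta> h = \<one>\<^bsub>H\<^esub>" using ker h(1) by (auto simp: kernel_def)
    then show ?thesis using h(2) x group_hom.hom_mult[OF ghom] L(8) by simp
  qed
  define \<eta>' where "\<eta>' C = \<eta> (SOME y. y \<in> C)" for C
  have e': "\<eta>' (q x) = \<eta> x" if x: "x \<in> carrier G" for x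
  proof -
    have "(SOME y. y \<in> q x) \<in> q x" using QF(6)[OF x] by (rule someI)
    then show ?thesis unfolding \<eta>'_def using const[OF x] by blast
  qed
  have qc: "\<And>x. x \<in> carrier G \<Longrightarrow> q x \<in> carrier Q" using QF(2) by blast
  have qs: "\<And>C. C \<in> carrier Q \<Longrightarrow> \<exists>x\<in>carrier G. C = q x" using QF(2) by blast
  have im: "\<eta>' ` carrier Q = \<eta> ` carrier G"
  proof
    show "\<eta>' ` carrier Q \<subseteq> \<eta> ` carrier G" using qs e' by force
    show "\<eta> ` carrier G \<subseteq> \<eta>' ` carrier Q" using qc e' by (metis image_subset_iff imageI)
  qed
  have eC: "\<eta>' C \<in> carrier H" if C: "C \<in> carrier Q" for C
  proof -
    obtain x where x: "x \<in> carrier G" "C = q x" using qs[OF C] by blast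
    show ?thesis unfolding x(2) e'[OF x(1)] by (rule L(8)[OF x(1)])
  qed
  have hom: "\<eta>' \<in> hom Q H"
  proof (rule homI)
    fix C assume "C \<in> carrier Q"
    then show "\<eta>' C \<in> carrier H" by (rule eC)
  next
    fix C D assume CD: "C \<in> carrier Q" "D \<in> carrier Q"
    obtain x where x: "x \<in> carrier G" "C = q x" using qs[OF CD(1)] by blast
    obtain y where y: "y \<in> carrier G" "D = q y" using qs[OF CD(2)] by blast
    note xy = x(1) y(1) x(2) y(2)
    have xyc: "x \<otimes>\<^bsub>G\<^esub> y \<in> carrier G" using xy(1,2) by (rule G.m_closed)
    have "C \<otimes>\<^bsub>Q\<^esub> D = q (x \<otimes>\<^bsub>G\<^esub> y)"
      unfolding xy(3,4) by (rule hom_mult[OF QF(3) xy(1) xy(2), symmetric])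
    then have "\<eta>' (C \<otimes>\<^bsub>Q\<^esub> D) = \<eta> (x \<otimes>\<^bsub>G\<^esub> y)" using e'[OF xyc] by (rule ssubst)
    also have "\<dots> = \<eta> x \<otimes>\<^bsub>H\<^esub> \<eta> y" using hom_mult[OF L(2) xy(1) xy(2)] .
    also have "\<dots> = \<eta>' C \<otimes>\<^bsub>H\<^esub> \<eta>' D" unfolding xy(3,4) e'[OF xy(1)] e'[OF xy(2)] ..
    finally show "\<eta>' (C \<otimes>\<^bsub>Q\<^esub> D) = \<eta>' C \<otimes>\<^bsub>H\<^esub> \<eta>' D" .
  qed
  have tsQ: "topspace TQ = carrier Q" unfolding TQ_def
  proof (rule topspace_quotient_topology)
    fix x assume "x \<in> topspace T"
    then have "x \<in> carrier G" using QF(5) by simp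
    then show "q x \<in> carrier Q" by (rule qc)
  qed
  have coarse: "\<And>U. openin \<tau> U \<Longrightarrow> openin T U" using td by (auto simp: T_td_def T_set_def coarser_group_topology_def)
  have pre: "{x \<in> carrier G. q x \<in> {C \<in> carrier Q. \<eta>' C \<in> U}} = {x \<in> topspace \<tau>. \<eta> x \<in> U}" for U
    using qc e' L(7) by force
  have cont: "continuous_map TQ \<sigma> \<eta>'"
    unfolding continuous_map_def
  proof (intro conjI allI impI)
    show "\<eta>' \<in> topspace TQ \<rightarrow> topspace \<sigma>" unfolding tsQ L(1) using eC by (rule funcsetI)
  next
    fix U assume "openin \<sigma> U"
    then have "openin \<tau> {x \<in> topspace \<tau>. \<eta> x \<in> U}" using L(3) by (simp add: continuous_map_def)
    then have "openin T {x \<in> carrier G. q x \<in> {C \<in> carrier Q. \<eta>' C \<in> U}}" using pre coarse by simp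
    then show "openin TQ {x \<in> topspace TQ. \<eta>' x \<in> U}" unfolding tsQ
      by (simp add: TQ_def openin_quotient_topology QF(5))
  qed
  have pb: "quotient_topology \<tau> q (carrier Q) = pullback_topology (carrier Q) \<eta>' \<sigma>"
    unfolding topology_eq
  proof (intro allI iffI)
    fix V assume "openin (quotient_topology \<tau> q (carrier Q)) V"
    then have V: "V \<subseteq> carrier Q" "openin (pullback_topology (carrier G) \<eta> \<sigma>) {x \<in> carrier G. q x \<in> V}"
      by (auto simp: openin_quotient_topology L(7) L(4)[symmetric])
    then obtain U where U: "openin \<sigma> U" "{x \<in> carrier G. q x \<in> V} = \<eta> -` U \<inter> carrier G"
      unfolding openin_pullback_topology by blast
    have "V = \<eta>' -` U \<inter> carrier Q"
    proof (rule Set.set_eqI)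
      fix C show "C \<in> V \<longleftrightarrow> C \<in> \<eta>' -` U \<inter> carrier Q"
      proof (cases "C \<in> carrier Q")
        case True
        then obtain x where x: "x \<in> carrier G" "C = q x" using qs[OF True] by blast
        have "C \<in> V \<longleftrightarrow> x \<in> {x \<in> carrier G. q x \<in> V}" using x by simp
        also have "\<dots> \<longleftrightarrow> \<eta> x \<in> U" using U(2) x by blast
        finally show ?thesis using x True e' by simp
      next
        case False then show ?thesis using V(1) by auto
      qed
    qed
    then show "openin (pullback_topology (carrier Q) \<eta>' \<sigma>) V"
      unfolding openin_pullback_topology using U(1) by blast
  next
    fix V assume "openin (pullback_topology (carrier Q) \<eta>' \<sigma>) V"
    then obtain U where U: "openin \<sigma> U" "V = \<eta>' -` U \<inter> carrier Q"
      unfolding openin_pullback_topology by blast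
    have "{x \<in> carrier G. q x \<in> V} = \<eta> -` U \<inter> carrier G" using U(2) qc e' by auto
    then have "openin \<tau> {x \<in> topspace \<tau>. q x \<in> V}"
      using U(1) L(7) by (subst L(4)) (auto simp: openin_pullback_topology)
    then show "openin (quotient_topology \<tau> q (carrier Q)) V"
      using U(2) by (simp add: openin_quotient_topology)
  qed
  have dense: "\<sigma> closure_of (\<eta> ` carrier G) = carrier H" using C by (simp add: lc_completion_def)
  have lcc: "lc_completion Q (quotient_topology \<tau> q (carrier Q)) H \<sigma> \<eta>'"
    unfolding lc_completion_def pb
    using L(6) hom dense im continuous_map_pullback[OF continuous_map_id, of "carrier Q" \<eta>' \<sigma>] by simp
  show ?thesis using hom cont e' pb lcc by blast
qed



lemma quotient_of_pullback:
  assumes "q ` A = B" "topspace X = B"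
  shows "quotient_topology (pullback_topology A q X) q B = X"
  unfolding topology_eq
proof (intro allI)
  fix V
  have ts: "topspace (pullback_topology A q X) = A"
    unfolding topspace_pullback_topology using assms by auto
  show "openin (quotient_topology (pullback_topology A q X) q B) V = openin X V"
  proof
    assume "openin (quotient_topology (pullback_topology A q X) q B) V"
    then have V: "V \<subseteq> B" "openin (pullback_topology A q X) {x \<in> A. q x \<in> V}"
      by (auto simp: openin_quotient_topology ts)
    then obtain W where W: "openin X W" "{x \<in> A. q x \<in> V} = q -` W \<inter> A"
      unfolding openin_pullback_topology by blast
    have WB: "W \<subseteq> B" using openin_subset[OF W(1)] assms(2) by simp
    have "V = W"
    proof (rule Set.set_eqI)
      fix b show "b \<in> V \<longleftrightarrow> b \<in> W"
      proof (cases "b \<in> B")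
        case True
        then obtain a where a: "a \<in> A" "b = q a" using assms(1) by blast
        have "b \<in> V \<longleftrightarrow> a \<in> {x \<in> A. q x \<in> V}" using a by simp
        also have "\<dots> \<longleftrightarrow> b \<in> W" using W(2) a by blast
        finally show ?thesis .
      next
        case False then show ?thesis using V(1) WB by blast
      qed
    qed
    then show "openin X V" using W(1) by simp
  next
    assume V: "openin X V"
    have "V \<subseteq> B" using openin_subset[OF V] assms(2) by simp
    moreover have "openin (pullback_topology A q X) {x \<in> A. q x \<in> V}"
      unfolding openin_pullback_topology using V by blast
    ultimately show "openin (quotient_topology (pullback_topology A q X) q B) V"
      by (simp add: openin_quotient_topology ts)
  qed
qed

lemma openin_pullback_pair:
  "openin (pullback_topology A (\<lambda>s. (f1 s, f2 s)) (prod_topology X1 X2)) S \<longleftrightarrow>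
     S \<subseteq> A \<and> (\<forall>x\<in>S. \<exists>S1 S2. openin (pullback_topology A f1 X1) S1 \<and> openin (pullback_topology A f2 X2) S2
        \<and> x \<in> S1 \<and> x \<in> S2 \<and> S1 \<inter> S2 \<subseteq> S)"
proof
  assume "openin (pullback_topology A (\<lambda>s. (f1 s, f2 s)) (prod_topology X1 X2)) S"
  then obtain W where W: "openin (prod_topology X1 X2) W" "S = (\<lambda>s. (f1 s, f2 s)) -` W \<inter> A"
    unfolding openin_pullback_topology by blast
  show "S \<subseteq> A \<and> (\<forall>x\<in>S. \<exists>S1 S2. openin (pullback_topology A f1 X1) S1 \<and> openin (pullback_topology A f2 X2) S2
        \<and> x \<in> S1 \<and> x \<in> S2 \<and> S1 \<inter> S2 \<subseteq> S)"
  proof (intro conjI ballI)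
    show "S \<subseteq> A" using W(2) by blast
  next
    fix x assume x: "x \<in> S"
    then have "(f1 x, f2 x) \<in> W" using W(2) by blast
    then obtain U V where UV: "openin X1 U" "openin X2 V" "f1 x \<in> U" "f2 x \<in> V" "U \<times> V \<subseteq> W"
      using W(1) unfolding openin_prod_topology_alt by meson
    have o1: "openin (pullback_topology A f1 X1) (f1 -` U \<inter> A)"
      unfolding openin_pullback_topology using UV(1) by blast
    have o2: "openin (pullback_topology A f2 X2) (f2 -` V \<inter> A)"
      unfolding openin_pullback_topology using UV(2) by blast
    have xA: "x \<in> A" using x W(2) by blast
    have i1: "x \<in> f1 -` U \<inter> A" using xA UV(3) by simp
    have i2: "x \<in> f2 -` V \<inter> A" using xA UV(4) by simp
    have sub: "(f1 -` U \<inter> A) \<inter> (f2 -` V \<inter> A) \<subseteq> S"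
    proof
      fix s assume s: "s \<in> (f1 -` U \<inter> A) \<inter> (f2 -` V \<inter> A)"
      then have "(f1 s, f2 s) \<in> W" using UV(5) by blast
      then show "s \<in> S" using s W(2) by blast
    qed
    show "\<exists>S1 S2. openin (pullback_topology A f1 X1) S1 \<and> openin (pullback_topology A f2 X2) S2
        \<and> x \<in> S1 \<and> x \<in> S2 \<and> S1 \<inter> S2 \<subseteq> S"
      by (rule exI[of _ "f1 -` U \<inter> A"], rule exI[of _ "f2 -` V \<inter> A"]) (intro conjI o1 o2 i1 i2 sub)
  qed
next
  assume R: "S \<subseteq> A \<and> (\<forall>x\<in>S. \<exists>S1 S2. openin (pullback_topology A f1 X1) S1 \<and> openin (pullback_topology A f2 X2) S2
        \<and> x \<in> S1 \<and> x \<in> S2 \<and> S1 \<inter> S2 \<subseteq> S)"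
  have "\<forall>x\<in>S. \<exists>UV. openin X1 (fst UV) \<and> openin X2 (snd UV) \<and> x \<in> f1 -` fst UV \<and> x \<in> f2 -` snd UV
          \<and> (f1 -` fst UV \<inter> A) \<inter> (f2 -` snd UV \<inter> A) \<subseteq> S"
  proof
    fix x assume x: "x \<in> S"
    then obtain S1 S2 where S12: "openin (pullback_topology A f1 X1) S1" "openin (pullback_topology A f2 X2) S2"
        "x \<in> S1" "x \<in> S2" "S1 \<inter> S2 \<subseteq> S" using R by blast
    obtain U where U: "openin X1 U" "S1 = f1 -` U \<inter> A" using S12(1) unfolding openin_pullback_topology by blast
    obtain V where V: "openin X2 V" "S2 = f2 -` V \<inter> A" using S12(2) unfolding openin_pullback_topology by blast
    show "\<exists>UV. openin X1 (fst UV) \<and> openin X2 (snd UV) \<and> x \<in> f1 -` fst UV \<and> x \<in> f2 -` snd UV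
          \<and> (f1 -` fst UV \<inter> A) \<inter> (f2 -` snd UV \<inter> A) \<subseteq> S"
      by (rule exI[of _ "(U, V)"]) (use U V S12 in auto)
  qed
  then have "\<exists>UV. \<forall>x\<in>S. openin X1 (fst (UV x)) \<and> openin X2 (snd (UV x)) \<and> x \<in> f1 -` fst (UV x) \<and> x \<in> f2 -` snd (UV x)
          \<and> (f1 -` fst (UV x) \<inter> A) \<inter> (f2 -` snd (UV x) \<inter> A) \<subseteq> S"
    by (rule bchoice)
  then obtain UV where UV0: "\<forall>x\<in>S. openin X1 (fst (UV x)) \<and> openin X2 (snd (UV x)) \<and> x \<in> f1 -` fst (UV x) \<and> x \<in> f2 -` snd (UV x)
          \<and> (f1 -` fst (UV x) \<inter> A) \<inter> (f2 -` snd (UV x) \<inter> A) \<subseteq> S" by (rule exE)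
  have UV: "openin X1 (fst (UV x))" "openin X2 (snd (UV x))" "x \<in> f1 -` fst (UV x)" "x \<in> f2 -` snd (UV x)"
          "(f1 -` fst (UV x) \<inter> A) \<inter> (f2 -` snd (UV x) \<inter> A) \<subseteq> S" if "x \<in> S" for x
    using bspec[OF UV0 that] by auto
  define W where "W = (\<Union>x\<in>S. fst (UV x) \<times> snd (UV x))"
  have "openin (prod_topology X1 X2) W"
    unfolding W_def by (rule openin_Union) (auto simp: openin_prod_Times_iff UV(1,2))
  moreover have "S = (\<lambda>s. (f1 s, f2 s)) -` W \<inter> A"
  proof
    show "S \<subseteq> (\<lambda>s. (f1 s, f2 s)) -` W \<inter> A"
    proof
      fix x assume x: "x \<in> S"
      then have "(f1 x, f2 x) \<in> fst (UV x) \<times> snd (UV x)" using UV(3,4)[OF x] by simp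
      then have "(f1 x, f2 x) \<in> W" unfolding W_def using x by blast
      then show "x \<in> (\<lambda>s. (f1 s, f2 s)) -` W \<inter> A" using x R by blast
    qed
    show "(\<lambda>s. (f1 s, f2 s)) -` W \<inter> A \<subseteq> S"
    proof
      fix s assume "s \<in> (\<lambda>s. (f1 s, f2 s)) -` W \<inter> A"
      then obtain x where x: "x \<in> S" "f1 s \<in> fst (UV x)" "f2 s \<in> snd (UV x)" "s \<in> A" unfolding W_def by auto
      then have "s \<in> (f1 -` fst (UV x) \<inter> A) \<inter> (f2 -` snd (UV x) \<inter> A)" by auto
      then show "s \<in> S" using UV(5)[OF x(1)] by blast
    qed
  qed
  ultimately show "openin (pullback_topology A (\<lambda>s. (f1 s, f2 s)) (prod_topology X1 X2)) S"
    unfolding openin_pullback_topology by blast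
qed

lemma pullback_pair_cong:
  assumes "pullback_topology A f1 X1 = pullback_topology A g1 Y1"
    "pullback_topology A f2 X2 = pullback_topology A g2 Y2"
  shows "pullback_topology A (\<lambda>s. (f1 s, f2 s)) (prod_topology X1 X2) =
         pullback_topology A (\<lambda>s. (g1 s, g2 s)) (prod_topology Y1 Y2)"
  unfolding topology_eq openin_pullback_pair assms by simp

lemma completion_of_spec:
  assumes "\<exists>(H::'a set set monoid) \<sigma> \<eta>. lc_completion (G::('a,'m) monoid_scheme) \<tau> H \<sigma> \<eta>"
    and "completion_of G \<tau> = (H, \<sigma>, \<eta>)"
  shows "lc_completion G \<tau> H \<sigma> \<eta>"
proof -
  obtain H0 :: "'a set set monoid" and \<sigma>0 \<eta>0 where "lc_completion G \<tau> H0 \<sigma>0 \<eta>0" using assms(1) by blast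
  then have "\<exists>p::'a set set monoid \<times> 'a set set topology \<times> ('a \<Rightarrow> 'a set set). (\<lambda>(H, \<sigma>, \<eta>). lc_completion G \<tau> H \<sigma> \<eta>) p" by (intro exI[of _ "(H0, \<sigma>0, \<eta>0)"]) simp
  then have "(\<lambda>(H, \<sigma>, \<eta>). lc_completion G \<tau> H \<sigma> \<eta>) (SOME p::'a set set monoid \<times> 'a set set topology \<times> ('a \<Rightarrow> 'a set set). (\<lambda>(H, \<sigma>, \<eta>). lc_completion G \<tau> H \<sigma> \<eta>) p)"
    by (rule someI_ex)
  then show ?thesis using assms(2) unfolding completion_of_def by simp
qed



theorem proposition2p1:
  fixes G :: "('a, 'm) monoid_scheme" and T :: "'a topology"
  defines "Ge \<equiv> connected_component_of_set T \<one>\<^bsub>G\<^esub>"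
  defines "q \<equiv> (\<lambda>x. Ge #>\<^bsub>G\<^esub> x)"
  defines "Q \<equiv> G Mod Ge"
  defines "TQ \<equiv> quotient_topology T q (carrier Q)"
  assumes "lc_group G T"
  shows "\<exists>\<phi>. bij_betw \<phi> (T_td G T) (T_td Q TQ)
    \<and> (\<forall>\<tau>1\<in>T_td G T. \<forall>\<tau>2\<in>T_td G T. \<phi> (tjoin G \<tau>1 \<tau>2) = tjoin Q (\<phi> \<tau>1) (\<phi> \<tau>2))
    \<and> (\<forall>\<tau>\<in>T_td G T. \<forall>(H :: ('c, 'n) monoid_scheme) \<sigma> \<eta>. lc_completion G \<tau> H \<sigma> \<eta> \<longrightarrow>
         Ge \<subseteq> kernel G H \<eta> \<and>
         (\<exists>\<eta>'. \<eta>' \<in> hom Q H \<and> continuous_map TQ \<sigma> \<eta>' \<and> (\<forall>x\<in>carrier G. \<eta>' (q x) = \<eta> x) \<and>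
            (\<forall>\<eta>''. \<eta>'' \<in> hom Q H \<and> continuous_map TQ \<sigma> \<eta>'' \<and> (\<forall>x\<in>carrier G. \<eta>'' (q x) = \<eta> x)
                \<longrightarrow> (\<forall>y\<in>carrier Q. \<eta>'' y = \<eta>' y)) \<and>
            \<phi> \<tau> = pullback_topology (carrier Q) \<eta>' \<sigma> \<and>
            lc_completion Q (\<phi> \<tau>) H \<sigma> \<eta>'))"
proof -
  have lc: "lc_group G T" by fact
  note QF = quotient_facts[OF lc, folded Ge_def, folded q_def, folded Q_def]
  have qs: "\<And>C. C \<in> carrier Q \<Longrightarrow> \<exists>x\<in>carrier G. C = q x" using QF(2) by blast
  have qc: "\<And>x. x \<in> carrier G \<Longrightarrow> q x \<in> carrier Q" using QF(2) by blast
  have qimg: "q ` carrier G \<subseteq> carrier Q" using qc by blast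
  define \<phi> where "\<phi> = (\<lambda>\<tau>. quotient_topology \<tau> q (carrier Q))"
  define \<psi> where "\<psi> = (\<lambda>\<tau>'. pullback_topology (carrier G) q \<tau>')"
  have step1: "\<phi> \<tau> \<in> T_td Q TQ \<and> \<psi> (\<phi> \<tau>) = \<tau>" if td: "\<tau> \<in> T_td G T" for \<tau>
  proof -
    obtain H0 :: "'a set set monoid" and \<sigma>0 \<eta>0 where C0: "lc_completion G \<tau> H0 \<sigma>0 \<eta>0"
      and td0: "totally_disconnected_space \<sigma>0" using td unfolding T_td_def by blast
    note L0 = lc_completion_carrier[OF C0]
    obtain \<eta>' where e: "\<eta>' \<in> hom Q H0" "\<forall>x\<in>carrier G. \<eta>' (q x) = \<eta>0 x"
       "quotient_topology \<tau> q (carrier Q) = pullback_topology (carrier Q) \<eta>' \<sigma>0"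
       "lc_completion Q (quotient_topology \<tau> q (carrier Q)) H0 \<sigma>0 \<eta>'"
      using descend[OF lc td C0, folded Ge_def, folded q_def, folded Q_def, folded TQ_def] by blast
    have lcc: "lc_completion Q (\<phi> \<tau>) H0 \<sigma>0 \<eta>'" using e(4) by (simp add: \<phi>_def)
    have tgQ: "topological_group Q (\<phi> \<tau>)" by (rule tg_of_completion[OF QF(1) lcc])
    have coarseG: "\<And>U. openin \<tau> U \<Longrightarrow> openin T U"
      using td by (auto simp: T_td_def T_set_def coarser_group_topology_def)
    have tst: "topspace \<tau> = carrier G" by (rule lc_completion_carrier(7)[OF C0])
    have coarse: "\<forall>U. openin (\<phi> \<tau>) U \<longrightarrow> openin TQ U"
    proof (intro allI impI)
      fix U assume "openin (\<phi> \<tau>) U"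
      then have U: "U \<subseteq> carrier Q" "openin \<tau> {x \<in> topspace \<tau>. q x \<in> U}"
        by (auto simp: \<phi>_def openin_quotient_topology)
      then have "openin T {x \<in> topspace T. q x \<in> U}" using coarseG tst QF(5) by simp
      then show "openin TQ U" using U(1) by (simp add: TQ_def openin_quotient_topology)
    qed
    obtain H' :: "'a set set set monoid" and \<sigma>' \<eta>'' where C': "lc_completion Q (\<phi> \<tau>) H' \<sigma>' \<eta>''"
      and td': "totally_disconnected_space \<sigma>0 \<longrightarrow> totally_disconnected_space \<sigma>'"
      using completion_to_setset[OF lcc] by blast
    have m: "\<phi> \<tau> \<in> T_td Q TQ"
      unfolding T_td_def T_set_def coarser_group_topology_def using tgQ coarse C' td' td0 by blast
    have "\<psi> (\<phi> \<tau>) = pullback_topology (carrier G) q (pullback_topology (carrier Q) \<eta>' \<sigma>0)"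
      using e(3) by (simp add: \<psi>_def \<phi>_def)
    also have "\<dots> = pullback_topology (carrier G) (\<eta>' \<circ> q) \<sigma>0" by (rule pullback_compose[OF qimg])
    also have "\<dots> = pullback_topology (carrier G) \<eta>0 \<sigma>0" by (rule pullback_cong) (use e(2) in simp)
    also have "\<dots> = \<tau>" using L0(4) by simp
    finally show ?thesis using m by simp
  qed
  have step2: "\<psi> \<tau>' \<in> T_td G T \<and> \<phi> (\<psi> \<tau>') = \<tau>'" if td: "\<tau>' \<in> T_td Q TQ" for \<tau>'
  proof -
    obtain K :: "'a set set set monoid" and \<rho> \<theta> where CK: "lc_completion Q \<tau>' K \<rho> \<theta>"
      and tdK: "totally_disconnected_space \<rho>" using td unfolding T_td_def by blast
    note LK = lc_completion_carrier[OF CK]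
    have coarseQ: "\<And>U. openin \<tau>' U \<Longrightarrow> openin TQ U"
      using td by (auto simp: T_td_def T_set_def coarser_group_topology_def)
    have dense: "\<rho> closure_of (\<theta> ` carrier Q) = carrier K" using CK by (simp add: lc_completion_def)
    have img: "(\<theta> \<circ> q) ` carrier G = \<theta> ` carrier Q" using QF(2) by (simp add: image_comp)
    have pbe: "\<psi> \<tau>' = pullback_topology (carrier G) (\<theta> \<circ> q) \<rho>"
    proof -
      have "\<psi> \<tau>' = pullback_topology (carrier G) q (pullback_topology (carrier Q) \<theta> \<rho>)"
        using LK(4) by (simp add: \<psi>_def)
      also have "\<dots> = pullback_topology (carrier G) (\<theta> \<circ> q) \<rho>" by (rule pullback_compose[OF qimg])
      finally show ?thesis .
    qed
    have CG: "lc_completion G (\<psi> \<tau>') K \<rho> (\<theta> \<circ> q)"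
      unfolding lc_completion_def
    proof (intro conjI)
      show "lc_group K \<rho>" by (rule LK(6))
      show "\<theta> \<circ> q \<in> hom G K" by (rule hom_compose[OF QF(3) LK(2)])
      show "continuous_map (\<psi> \<tau>') \<rho> (\<theta> \<circ> q)" unfolding \<psi>_def by (rule continuous_map_pullback[OF LK(3)])
      show "\<rho> closure_of ((\<theta> \<circ> q) ` carrier G) = carrier K" using dense img by simp
      show "\<psi> \<tau>' = pullback_topology (carrier G) (\<theta> \<circ> q) \<rho>" by (rule pbe)
    qed
    obtain H :: "'a set set monoid" and \<sigma> \<eta> where CH: "lc_completion G (\<psi> \<tau>') H \<sigma> \<eta>"
      and tdH: "totally_disconnected_space \<rho> \<longrightarrow> totally_disconnected_space \<sigma>"
      using completion_to_setset[OF CG] by blast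
    have tgG: "topological_group G (\<psi> \<tau>')" by (rule tg_of_completion[OF QF(4) CG])
    have coarse: "\<forall>U. openin (\<psi> \<tau>') U \<longrightarrow> openin T U"
    proof (intro allI impI)
      fix S assume "openin (\<psi> \<tau>') S"
      then obtain V where V: "openin \<tau>' V" "S = q -` V \<inter> carrier G"
        unfolding \<psi>_def openin_pullback_topology by blast
      have "openin TQ V" using coarseQ[OF V(1)] .
      then have "openin T {x \<in> topspace T. q x \<in> V}" by (simp add: TQ_def openin_quotient_topology)
      moreover have "{x \<in> topspace T. q x \<in> V} = S" using V(2) QF(5) by auto
      ultimately show "openin T S" by simp
    qed
    have m: "\<psi> \<tau>' \<in> T_td G T"
      unfolding T_td_def T_set_def coarser_group_topology_def using tgG coarse CH tdH tdK by blast
    have "\<phi> (\<psi> \<tau>') = \<tau>'"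
      unfolding \<phi>_def \<psi>_def by (rule quotient_of_pullback[OF QF(2)[symmetric] LK(7)])
    then show ?thesis using m by simp
  qed
  have bij: "bij_betw \<phi> (T_td G T) (T_td Q TQ)"
    by (rule bij_betw_byWitness[where f'=\<psi>]) (use step1 step2 in auto)
  have join: "\<phi> (tjoin G \<tau>1 \<tau>2) = tjoin Q (\<phi> \<tau>1) (\<phi> \<tau>2)"
    if t1: "\<tau>1 \<in> T_td G T" and t2: "\<tau>2 \<in> T_td G T" for \<tau>1 \<tau>2
  proof -
    obtain H1 \<sigma>1 \<eta>1 where c1: "completion_of G \<tau>1 = (H1, \<sigma>1, \<eta>1)" by (cases "completion_of G \<tau>1") auto
    obtain H2 \<sigma>2 \<eta>2 where c2: "completion_of G \<tau>2 = (H2, \<sigma>2, \<eta>2)" by (cases "completion_of G \<tau>2") auto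
    have C1: "lc_completion G \<tau>1 H1 \<sigma>1 \<eta>1"
      by (rule completion_of_spec[OF _ c1]) (use t1 in \<open>auto simp: T_td_def T_set_def\<close>)
    have C2: "lc_completion G \<tau>2 H2 \<sigma>2 \<eta>2"
      by (rule completion_of_spec[OF _ c2]) (use t2 in \<open>auto simp: T_td_def T_set_def\<close>)
    obtain \<eta>1' where e1: "\<forall>x\<in>carrier G. \<eta>1' (q x) = \<eta>1 x"
       "quotient_topology \<tau>1 q (carrier Q) = pullback_topology (carrier Q) \<eta>1' \<sigma>1"
       "lc_completion Q (quotient_topology \<tau>1 q (carrier Q)) H1 \<sigma>1 \<eta>1'"
      using descend[OF lc t1 C1, folded Ge_def, folded q_def, folded Q_def, folded TQ_def] by blast
    obtain \<eta>2' where e2: "\<forall>x\<in>carrier G. \<eta>2' (q x) = \<eta>2 x"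
       "quotient_topology \<tau>2 q (carrier Q) = pullback_topology (carrier Q) \<eta>2' \<sigma>2"
       "lc_completion Q (quotient_topology \<tau>2 q (carrier Q)) H2 \<sigma>2 \<eta>2'"
      using descend[OF lc t2 C2, folded Ge_def, folded q_def, folded Q_def, folded TQ_def] by blast
    obtain K1 \<rho>1 \<theta>1 where d1: "completion_of Q (\<phi> \<tau>1) = (K1, \<rho>1, \<theta>1)" by (cases "completion_of Q (\<phi> \<tau>1)") auto
    obtain K2 \<rho>2 \<theta>2 where d2: "completion_of Q (\<phi> \<tau>2) = (K2, \<rho>2, \<theta>2)" by (cases "completion_of Q (\<phi> \<tau>2)") auto
    have m1: "\<phi> \<tau>1 \<in> T_td Q TQ" using step1[OF t1] by simp
    have m2: "\<phi> \<tau>2 \<in> T_td Q TQ" using step1[OF t2] by simp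
    have D1: "lc_completion Q (\<phi> \<tau>1) K1 \<rho>1 \<theta>1"
      by (rule completion_of_spec[OF _ d1]) (use m1 in \<open>auto simp: T_td_def T_set_def\<close>)
    have D2: "lc_completion Q (\<phi> \<tau>2) K2 \<rho>2 \<theta>2"
      by (rule completion_of_spec[OF _ d2]) (use m2 in \<open>auto simp: T_td_def T_set_def\<close>)
    have p1: "pullback_topology (carrier Q) \<theta>1 \<rho>1 = pullback_topology (carrier Q) \<eta>1' \<sigma>1"
      using lc_completion_carrier(4)[OF D1] e1(2) by (simp add: \<phi>_def)
    have p2: "pullback_topology (carrier Q) \<theta>2 \<rho>2 = pullback_topology (carrier Q) \<eta>2' \<sigma>2"
      using lc_completion_carrier(4)[OF D2] e2(2) by (simp add: \<phi>_def)
    define X where "X = pullback_topology (carrier Q) (\<lambda>C. (\<eta>1' C, \<eta>2' C)) (prod_topology \<sigma>1 \<sigma>2)"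
    have tQ: "tjoin Q (\<phi> \<tau>1) (\<phi> \<tau>2) = X"
      unfolding X_def tjoin_def d1 d2 using pullback_pair_cong[OF p1 p2] by simp
    have tG: "tjoin G \<tau>1 \<tau>2 = pullback_topology (carrier G) q X"
    proof -
      have "tjoin G \<tau>1 \<tau>2 = pullback_topology (carrier G) (\<lambda>s. (\<eta>1 s, \<eta>2 s)) (prod_topology \<sigma>1 \<sigma>2)"
        unfolding tjoin_def c1 c2 by simp
      also have "\<dots> = pullback_topology (carrier G) ((\<lambda>C. (\<eta>1' C, \<eta>2' C)) \<circ> q) (prod_topology \<sigma>1 \<sigma>2)"
        by (rule pullback_cong) (use e1(1) e2(1) in simp)
      also have "\<dots> = pullback_topology (carrier G) q X"
        unfolding X_def by (rule pullback_compose[OF qimg, symmetric])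
      finally show ?thesis .
    qed
    have in1: "\<And>C. C \<in> carrier Q \<Longrightarrow> \<eta>1' C \<in> topspace \<sigma>1"
      using lc_completion_carrier(8)[OF e1(3)] lc_completion_carrier(1)[OF e1(3)] by simp
    have in2: "\<And>C. C \<in> carrier Q \<Longrightarrow> \<eta>2' C \<in> topspace \<sigma>2"
      using lc_completion_carrier(8)[OF e2(3)] lc_completion_carrier(1)[OF e2(3)] by simp
    have tsX: "topspace X = carrier Q"
      unfolding X_def topspace_pullback_topology topspace_prod_topology using in1 in2 by auto
    have "\<phi> (tjoin G \<tau>1 \<tau>2) = X"
      unfolding tG \<phi>_def by (rule quotient_of_pullback[OF QF(2)[symmetric] tsX])
    then show ?thesis using tQ by simp
  qed
  have third: "Ge \<subseteq> kernel G H \<eta> \<and>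
         (\<exists>\<eta>'. \<eta>' \<in> hom Q H \<and> continuous_map TQ \<sigma> \<eta>' \<and> (\<forall>x\<in>carrier G. \<eta>' (q x) = \<eta> x) \<and>
            (\<forall>\<eta>''. \<eta>'' \<in> hom Q H \<and> continuous_map TQ \<sigma> \<eta>'' \<and> (\<forall>x\<in>carrier G. \<eta>'' (q x) = \<eta> x)
                \<longrightarrow> (\<forall>y\<in>carrier Q. \<eta>'' y = \<eta>' y)) \<and>
            \<phi> \<tau> = pullback_topology (carrier Q) \<eta>' \<sigma> \<and>
            lc_completion Q (\<phi> \<tau>) H \<sigma> \<eta>')"
    if td: "\<tau> \<in> T_td G T" and C: "lc_completion G \<tau> (H :: ('c, 'n) monoid_scheme) \<sigma> \<eta>" for \<tau> H \<sigma> \<eta>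
  proof -
    have k: "Ge \<subseteq> kernel G H \<eta>" unfolding Ge_def by (rule Ge_kernel[OF lc td C])
    obtain \<eta>' where e: "\<eta>' \<in> hom Q H" "continuous_map TQ \<sigma> \<eta>'" "\<forall>x\<in>carrier G. \<eta>' (q x) = \<eta> x"
       "quotient_topology \<tau> q (carrier Q) = pullback_topology (carrier Q) \<eta>' \<sigma>"
       "lc_completion Q (quotient_topology \<tau> q (carrier Q)) H \<sigma> \<eta>'"
      using descend[OF lc td C, folded Ge_def, folded q_def, folded Q_def, folded TQ_def] by blast
    have u: "\<forall>\<eta>''. \<eta>'' \<in> hom Q H \<and> continuous_map TQ \<sigma> \<eta>'' \<and> (\<forall>x\<in>carrier G. \<eta>'' (q x) = \<eta> x)
                \<longrightarrow> (\<forall>y\<in>carrier Q. \<eta>'' y = \<eta>' y)"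
    proof (intro allI impI ballI)
      fix \<eta>'' y assume h: "\<eta>'' \<in> hom Q H \<and> continuous_map TQ \<sigma> \<eta>'' \<and> (\<forall>x\<in>carrier G. \<eta>'' (q x) = \<eta> x)"
        and y: "y \<in> carrier Q"
      obtain x where x: "x \<in> carrier G" "y = q x" using qs[OF y] by blast
      show "\<eta>'' y = \<eta>' y" using h e(3) x by simp
    qed
    show ?thesis unfolding \<phi>_def using k e u by blast
  qed
  show ?thesis
    by (rule exI[of _ \<phi>]) (intro conjI bij ballI allI impI join third; assumption)
qed


end
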